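(* Let $\rho_{A^nB^n}$ be a positive semidefinite operator on $(\mathbb{C}^{d_Ad_B})^{\otimes n}$ that is permutation-invariant and IID-block-diagonal with respect to orthogonal projections $\{\Pi_i\}_{i=1}^k$ on $\mathbb{C}^{d_Ad_B}$ of ranks $\{d_i\}_{i=1}^k$. Then there exists a purification $|\Psi\rangle\in(\mathbb{C}^{d_Ad_B}\otimes\mathbb{C}^{d_Ad_B})^{\otimes n}$ of $\rho_{A^nB^n}$ supported on $\mathrm{Sym}^n\big(\bigoplus_{i=1}^k\mathbb{C}^{d_i}\otimes\mathbb{C}^{d_i}\big)$, where $\bigoplus_{i=1}^k\mathbb{C}^{d_i}\otimes\mathbb{C}^{d_i}$ denotes the subspace $\bigoplus_{i=1}^k\mathrm{range}(\Pi_i)\otimes\mathrm{range}(\overline{\Pi_i})$ of $\mathbb{C}^{d_Ad_B}\otimes\mathbb{C}^{d_Ad_B}$ (complex conjugation taken in a fixed basis).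
   Context: An operator $\rho$ on $(\mathbb{C}^{d_Ad_B})^{\otimes n}$ is permutation-invariant if $P_\pi\rho P_\pi^\dagger=\rho$ for all $\pi\in S_n$, with $P_\pi$ the unitary permuting the $n$ tensor factors. Given orthogonal projections $\{\Pi_i\}_{i=1}^k$ on $\mathbb{C}^{d_Ad_B}$, $\rho$ is IID-block-diagonal if $\rho=\sum_{\vec{j}\in[k]^n}\Pi_{\vec{j}}\rho\Pi_{\vec{j}}$ where $\Pi_{\vec j}=\Pi_{j_1}\otimes\cdots\otimes\Pi_{j_n}$. $\mathrm{Sym}^n(V)$ is the symmetric subspace of $V^{\otimes n}$, with $V^{\otimes n}$ viewed inside $(\mathbb{C}^{d_Ad_B}\otimes\mathbb{C}^{d_Ad_B})^{\otimes n}$; the purification is with respect to the second factor of each pair (i.e. tracing out the $n$ purifying copies of $\mathbb{C}^{d_Ad_B}$ gives $\rho$). *)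

theory Defs
  imports Complex_Main "HOL-Library.Complex_Order" "HOL-Combinatorics.Permutations"
begin

text \<open>A vector of C^D is a function nat => complex (only entries < D matter),
an operator on C^D is a function nat => nat => complex (entries a,b < D).
The computational basis of (C^D)^{tensor n} is indexed by lists of length n with entries < D;
operators on it are functions nat list => nat list => complex (only entries on that index
set matter). The space (C^D tensor C^D)^{tensor n} has basis indexed by lists of pairs.\<close>

definition idx :: "nat \<Rightarrow> nat \<Rightarrow> nat list set" where
  "idx n D = {xs. length xs = n \<and> set xs \<subseteq> {..<D}}"

definition pidx :: "nat \<Rightarrow> nat \<Rightarrow> (nat \<times> nat) list set" where
  "pidx n D = {ps. length ps = n \<and> set ps \<subseteq> {..<D} \<times> {..<D}}"

definition psd_op :: "nat \<Rightarrow> nat \<Rightarrow> (nat list \<Rightarrow> nat list \<Rightarrow> complex) \<Rightarrow> bool" where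
  "psd_op n D \<rho> \<longleftrightarrow>
     (\<forall>x\<in>idx n D. \<forall>y\<in>idx n D. \<rho> x y = cnj (\<rho> y x)) \<and>
     (\<forall>v :: nat list \<Rightarrow> complex.
        0 \<le> (\<Sum>x\<in>idx n D. \<Sum>y\<in>idx n D. cnj (v x) * \<rho> x y * v y))"

definition perm_invariant :: "nat \<Rightarrow> nat \<Rightarrow> (nat list \<Rightarrow> nat list \<Rightarrow> complex) \<Rightarrow> bool" where
  "perm_invariant n D \<rho> \<longleftrightarrow>
     (\<forall>\<pi>. \<pi> permutes {..<n} \<longrightarrow>
        (\<forall>x\<in>idx n D. \<forall>y\<in>idx n D. \<rho> (permute_list \<pi> x) (permute_list \<pi> y) = \<rho> x y))"

definition orth_proj :: "nat \<Rightarrow> (nat \<Rightarrow> nat \<Rightarrow> complex) \<Rightarrow> bool" where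
  "orth_proj D P \<longleftrightarrow>
     (\<forall>a<D. \<forall>b<D. P a b = cnj (P b a)) \<and>
     (\<forall>a<D. \<forall>b<D. (\<Sum>c<D. P a c * P c b) = P a b)"

text \<open>Pi_{j_1} tensor ... tensor Pi_{j_n} as an operator on (C^D)^{tensor n}.\<close>
definition tensor_proj :: "(nat \<Rightarrow> nat \<Rightarrow> nat \<Rightarrow> complex) \<Rightarrow> nat list \<Rightarrow> nat list \<Rightarrow> nat list \<Rightarrow> complex" where
  "tensor_proj Proj js x y = (\<Prod>i<length js. Proj (js ! i) (x ! i) (y ! i))"

definition iid_block_diag ::
  "nat \<Rightarrow> nat \<Rightarrow> nat \<Rightarrow> (nat \<Rightarrow> nat \<Rightarrow> nat \<Rightarrow> complex) \<Rightarrow> (nat list \<Rightarrow> nat list \<Rightarrow> complex) \<Rightarrow> bool" where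
  "iid_block_diag n D k Proj \<rho> \<longleftrightarrow>
     (\<forall>x\<in>idx n D. \<forall>y\<in>idx n D.
        \<rho> x y = (\<Sum>js\<in>idx n k. \<Sum>u\<in>idx n D. \<Sum>w\<in>idx n D.
                     tensor_proj Proj js x u * \<rho> u w * tensor_proj Proj js w y))"

definition range_op :: "nat \<Rightarrow> (nat \<Rightarrow> nat \<Rightarrow> complex) \<Rightarrow> (nat \<Rightarrow> complex) set" where
  "range_op D P = {u. \<exists>v. u = (\<lambda>a. if a < D then (\<Sum>b<D. P a b * v b) else 0)}"

definition conj_op :: "(nat \<Rightarrow> nat \<Rightarrow> complex) \<Rightarrow> nat \<Rightarrow> nat \<Rightarrow> complex" where
  "conj_op P = (\<lambda>a b. cnj (P a b))"

definition tensor_sub :: "(nat \<Rightarrow> complex) set \<Rightarrow> (nat \<Rightarrow> complex) set \<Rightarrow> (nat \<times> nat \<Rightarrow> complex) set" where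
  "tensor_sub U W = {t. \<exists>(m::nat) (c::nat \<Rightarrow> complex) u w.
       (\<forall>l<m. u l \<in> U \<and> w l \<in> W) \<and>
       t = (\<lambda>(a,b). \<Sum>l<m. c l * u l a * w l b)}"

definition sum_sub :: "nat \<Rightarrow> (nat \<Rightarrow> ('a \<Rightarrow> complex) set) \<Rightarrow> ('a \<Rightarrow> complex) set" where
  "sum_sub k S = {t. \<exists>ts. (\<forall>i<k. ts i \<in> S i) \<and> t = (\<lambda>p. \<Sum>i<k. ts i p)}"

definition prod_vec :: "nat \<Rightarrow> (nat \<Rightarrow> nat \<times> nat \<Rightarrow> complex) \<Rightarrow> (nat \<times> nat) list \<Rightarrow> complex" where
  "prod_vec n vs ps = (if length ps = n then (\<Prod>i<n. vs i (ps ! i)) else 0)"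

definition tensor_pow :: "nat \<Rightarrow> (nat \<times> nat \<Rightarrow> complex) set \<Rightarrow> ((nat \<times> nat) list \<Rightarrow> complex) set" where
  "tensor_pow n V = {\<Psi>. \<exists>(m::nat) (c::nat \<Rightarrow> complex) vs.
       (\<forall>l<m. \<forall>i<n. vs l i \<in> V) \<and>
       \<Psi> = (\<lambda>ps. \<Sum>l<m. c l * prod_vec n (vs l) ps)}"

definition Sym :: "nat \<Rightarrow> (nat \<times> nat \<Rightarrow> complex) set \<Rightarrow> ((nat \<times> nat) list \<Rightarrow> complex) set" where
  "Sym n V = {\<Psi> \<in> tensor_pow n V.
       \<forall>\<pi>. \<pi> permutes {..<n} \<longrightarrow> (\<lambda>ps. \<Psi> (permute_list \<pi> ps)) = \<Psi>}"

text \<open>Psi purifies rho: tracing out the second factor of each pair of |Psi><Psi| gives rho.\<close>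
definition purifies :: "nat \<Rightarrow> nat \<Rightarrow> ((nat \<times> nat) list \<Rightarrow> complex) \<Rightarrow> (nat list \<Rightarrow> nat list \<Rightarrow> complex) \<Rightarrow> bool" where
  "purifies n D \<Psi> \<rho> \<longleftrightarrow>
     (\<forall>x\<in>idx n D. \<forall>y\<in>idx n D.
        \<rho> x y = (\<Sum>z\<in>idx n D. \<Psi> (zip x z) * cnj (\<Psi> (zip y z))))"

end

theory Submission
  imports Defs "HOL-Computational_Algebra.Fundamental_Theorem_Algebra" "HOL-Library.Function_Algebras"
begin

type_synonym 'a mt = "'a \<Rightarrow> 'a \<Rightarrow> complex"

definition mmul :: "'a set \<Rightarrow> 'a mt \<Rightarrow> 'a mt \<Rightarrow> 'a mt" where
  "mmul S A B = (\<lambda>x y. if x \<in> S \<and> y \<in> S then (\<Sum>u\<in>S. A x u * B u y) else 0)"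

definition mone :: "'a set \<Rightarrow> 'a mt" where
  "mone S = (\<lambda>x y. if x \<in> S \<and> x = y then 1 else 0)"

definition mz :: "'a mt" where "mz = (\<lambda>x y. 0)"

definition rst :: "'a set \<Rightarrow> 'a mt \<Rightarrow> 'a mt" where
  "rst S A = (\<lambda>x y. if x \<in> S \<and> y \<in> S then A x y else 0)"

definition supp :: "'a set \<Rightarrow> 'a mt \<Rightarrow> bool" where
  "supp S M \<longleftrightarrow> (\<forall>x y. \<not> (x \<in> S \<and> y \<in> S) \<longrightarrow> M x y = 0)"

fun mpow :: "'a set \<Rightarrow> 'a mt \<Rightarrow> nat \<Rightarrow> 'a mt" where
  "mpow S A 0 = mone S"
| "mpow S A (Suc m) = mmul S A (mpow S A m)"

definition mev :: "'a set \<Rightarrow> complex poly \<Rightarrow> 'a mt \<Rightarrow> 'a mt" where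
  "mev S p A = (\<lambda>x y. \<Sum>i\<le>degree p. coeff p i * mpow S A i x y)"

lemma supp_mmul[simp]: "supp S (mmul S A B)" by (auto simp: supp_def mmul_def)
lemma supp_mone[simp]: "supp S (mone S)" by (auto simp: supp_def mone_def)
lemma supp_rst[simp]: "supp S (rst S A)" by (auto simp: supp_def rst_def)
lemma supp_mpow[simp]: "supp S (mpow S A i)" by (cases i) auto

lemma supp_mev[simp]: "supp S (mev S p A)"
  using supp_mpow[of S A] by (auto simp: supp_def mev_def)

lemma supp_rst_eq: "supp S M \<Longrightarrow> rst S M = M"
  by (auto simp: supp_def rst_def fun_eq_iff)

lemma mmul_rst_left[simp]: "mmul S (rst S A) B = mmul S A B"
  by (auto simp: mmul_def rst_def fun_eq_iff intro!: sum.cong)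
lemma mmul_rst_right[simp]: "mmul S A (rst S B) = mmul S A B"
  by (auto simp: mmul_def rst_def fun_eq_iff intro!: sum.cong)

lemma mmul_assoc:
  assumes "finite S"
  shows "mmul S (mmul S A B) C = mmul S A (mmul S B C)"
proof -
  have e: "(\<Sum>u\<in>S. (\<Sum>v\<in>S. A x v * B v u) * C u y) = (\<Sum>v\<in>S. A x v * (\<Sum>u\<in>S. B v u * C u y))" for x y
  proof -
    have "(\<Sum>u\<in>S. (\<Sum>v\<in>S. A x v * B v u) * C u y) = (\<Sum>u\<in>S. \<Sum>v\<in>S. A x v * B v u * C u y)"
      by (simp add: sum_distrib_right)
    also have "\<dots> = (\<Sum>v\<in>S. \<Sum>u\<in>S. A x v * B v u * C u y)"
      by (rule sum.swap)
    also have "\<dots> = (\<Sum>v\<in>S. A x v * (\<Sum>u\<in>S. B v u * C u y))"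
      by (simp add: sum_distrib_left mult.assoc)
    finally show ?thesis .
  qed
  show ?thesis
  proof (intro ext)
    fix x y
    have l: "(\<Sum>u\<in>S. mmul S A B x u * C u y) = (\<Sum>u\<in>S. (\<Sum>v\<in>S. A x v * B v u) * C u y)" if "x \<in> S"
      by (rule sum.cong) (auto simp: mmul_def that)
    have r: "(\<Sum>v\<in>S. A x v * mmul S B C v y) = (\<Sum>v\<in>S. A x v * (\<Sum>u\<in>S. B v u * C u y))" if "y \<in> S"
      by (rule sum.cong) (auto simp: mmul_def that)
    show "mmul S (mmul S A B) C x y = mmul S A (mmul S B C) x y"
      using l r e by (simp add: mmul_def)
  qed
qed

lemma mmul_one_left: "finite S \<Longrightarrow> mmul S (mone S) B = rst S B"
proof (intro ext)
  fix x y assume "finite S"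
  have "(\<Sum>u\<in>S. mone S x u * B u y) = (\<Sum>u\<in>S. if u = x then B x y else 0)" if "x \<in> S"
    by (rule sum.cong) (auto simp: mone_def that)
  then show "mmul S (mone S) B x y = rst S B x y"
    using \<open>finite S\<close> by (simp add: mmul_def rst_def)
qed
lemma mmul_one_right: "finite S \<Longrightarrow> mmul S B (mone S) = rst S B"
proof (intro ext)
  fix x y assume "finite S"
  have "(\<Sum>u\<in>S. B x u * mone S u y) = (\<Sum>u\<in>S. if u = y then B x y else 0)" if "y \<in> S"
    by (rule sum.cong) (auto simp: mone_def that)
  then show "mmul S B (mone S) x y = rst S B x y"
    using \<open>finite S\<close> by (simp add: mmul_def rst_def)
qed

lemma mmul_zero_left[simp]: "mmul S mz B = mz" by (auto simp: mmul_def mz_def fun_eq_iff)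
lemma mmul_zero_right[simp]: "mmul S B mz = mz" by (auto simp: mmul_def mz_def fun_eq_iff)
lemma mmul_zero_left'[simp]: "mmul S (\<lambda>x y. 0) B = mz" by (auto simp: mmul_def mz_def fun_eq_iff)
lemma mmul_zero_right'[simp]: "mmul S B (\<lambda>x y. 0) = mz" by (auto simp: mmul_def mz_def fun_eq_iff)

lemma mmul_add_left: "mmul S (\<lambda>x y. A x y + B x y) C = (\<lambda>x y. mmul S A C x y + mmul S B C x y)"
  by (auto simp: mmul_def fun_eq_iff distrib_right sum.distrib)
lemma mmul_add_right: "mmul S C (\<lambda>x y. A x y + B x y) = (\<lambda>x y. mmul S C A x y + mmul S C B x y)"
  by (auto simp: mmul_def fun_eq_iff distrib_left sum.distrib)
lemma mmul_scale_left: "mmul S (\<lambda>x y. c * A x y) C = (\<lambda>x y. c * mmul S A C x y)"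
  by (auto simp: mmul_def fun_eq_iff sum_distrib_left mult.assoc)
lemma mmul_scale_right: "mmul S C (\<lambda>x y. c * A x y) = (\<lambda>x y. c * mmul S C A x y)"
  by (auto simp: mmul_def fun_eq_iff sum_distrib_left mult.assoc mult.left_commute)
lemma mmul_sum_left: "mmul S (\<lambda>x y. \<Sum>j\<in>J. A j x y) C = (\<lambda>x y. \<Sum>j\<in>J. mmul S (A j) C x y)"
  unfolding mmul_def fun_eq_iff sum_distrib_right by (auto intro: sum.swap)
lemma mmul_sum_right: "mmul S C (\<lambda>x y. \<Sum>j\<in>J. A j x y) = (\<lambda>x y. \<Sum>j\<in>J. mmul S C (A j) x y)"
  unfolding mmul_def fun_eq_iff sum_distrib_left by (auto intro: sum.swap)

lemma mev_N:
  assumes "degree p \<le> N"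
  shows "mev S p A = (\<lambda>x y. \<Sum>i\<le>N. coeff p i * mpow S A i x y)"
  unfolding mev_def fun_eq_iff
  using assms by (auto intro!: sum.mono_neutral_left simp: coeff_eq_0 le_degree)

lemma mev_pCons: "mev S (pCons a p) A = (\<lambda>x y. a * mone S x y + mmul S A (mev S p A) x y)"
proof -
  have d: "degree (pCons a p) \<le> Suc (degree p)" by (simp add: degree_pCons_le)
  have "mev S (pCons a p) A = (\<lambda>x y. \<Sum>i\<le>Suc (degree p). coeff (pCons a p) i * mpow S A i x y)"
    by (rule mev_N[OF d])
  also have "\<dots> = (\<lambda>x y. a * mone S x y + (\<Sum>i\<le>degree p. coeff p i * mmul S A (mpow S A i) x y))"
    by (subst sum.atMost_Suc_shift) simp
  also have "(\<lambda>x y. (\<Sum>i\<le>degree p. coeff p i * mmul S A (mpow S A i) x y)) = mmul S A (mev S p A)"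
    unfolding mev_def mmul_sum_right mmul_scale_right by simp
  finally show ?thesis by simp
qed

lemma mev_0[simp]: "mev S 0 A = mz"
  by (simp add: mev_def mz_def mone_def fun_eq_iff)

lemma mev_add: "mev S (p + q) A = (\<lambda>x y. mev S p A x y + mev S q A x y)"
proof -
  let ?N = "max (degree p) (degree q)"
  have "mev S (p + q) A = (\<lambda>x y. \<Sum>i\<le>?N. coeff (p+q) i * mpow S A i x y)"
    by (rule mev_N) (simp add: degree_add_le)
  also have "\<dots> = (\<lambda>x y. (\<Sum>i\<le>?N. coeff p i * mpow S A i x y) + (\<Sum>i\<le>?N. coeff q i * mpow S A i x y))"
    by (simp add: distrib_right sum.distrib)
  finally show ?thesis by (simp add: mev_N[of p ?N] mev_N[of q ?N])
qed

lemma mev_smult: "mev S (smult c p) A = (\<lambda>x y. c * mev S p A x y)"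
  by (simp add: mev_N[of "smult c p" "degree p"] mev_def sum_distrib_left mult.assoc)

lemma mev_minus: "mev S (- p) A = (\<lambda>x y. - mev S p A x y)"
  using mev_smult[of S "-1" p A] by simp

lemma mev_diff: "mev S (p - q) A = (\<lambda>x y. mev S p A x y - mev S q A x y)"
  using mev_add[of S p "-q" A] mev_minus[of S q A] by simp

lemma mev_mult:
  assumes "finite S"
  shows "mev S (p * q) A = mmul S (mev S p A) (mev S q A)"
proof (induction p)
  case 0
  then show ?case by simp
next
  case (pCons a p)
  have "mev S (pCons a p * q) A = (\<lambda>x y. a * mev S q A x y + mmul S A (mev S (p * q) A) x y)"
    by (simp add: mev_add mev_smult mev_pCons)
  also have "\<dots> = mmul S (mev S (pCons a p) A) (mev S q A)"
    by (simp add: mev_pCons mmul_add_left mmul_scale_left mmul_one_left[OF assms]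
          supp_rst_eq mmul_assoc[OF assms] pCons.IH)
  finally show ?case .
qed

lemma mev_monom: "mev S (monom c i) A = (\<lambda>x y. c * mpow S A i x y)"
proof -
  have "mev S (monom c i) A = (\<lambda>x y. \<Sum>j\<le>i. coeff (monom c i) j * mpow S A j x y)"
    by (rule mev_N) (simp add: degree_monom_le)
  also have "\<dots> = (\<lambda>x y. \<Sum>j\<le>i. if j = i then c * mpow S A i x y else 0)"
    by (intro ext sum.cong) (auto simp: coeff_monom)
  finally show ?thesis by simp
qed


lemma mev_pCons_restr:
  "mev S (pCons a p) A x y = a * mone S x y + mmul S A (mev S p A) x y"
  by (simp add: mev_pCons)

lemma mev_perm:
  assumes fin: "finite S" and bij: "bij_betw \<sigma> S S"
    and inv: "\<forall>x\<in>S. \<forall>y\<in>S. A (\<sigma> x) (\<sigma> y) = A x y"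
  shows "\<forall>x\<in>S. \<forall>y\<in>S. mev S p A (\<sigma> x) (\<sigma> y) = mev S p A x y"
proof (induction p)
  case 0
  then show ?case by (simp add: mz_def)
next
  case (pCons a p)
  have inj: "inj_on \<sigma> S" and im: "\<sigma> ` S = S" using bij by (auto simp: bij_betw_def)
  have sS: "\<sigma> x \<in> S" if "x \<in> S" for x using im that by auto
  have one: "mone S (\<sigma> x) (\<sigma> y) = mone S x y" if "x \<in> S" "y \<in> S" for x y
    using inj that sS by (auto simp: mone_def inj_on_eq_iff)
  have mm: "mmul S A (mev S p A) (\<sigma> x) (\<sigma> y) = mmul S A (mev S p A) x y" if "x \<in> S" "y \<in> S" for x y
  proof -
    have "(\<Sum>u\<in>S. A (\<sigma> x) u * mev S p A u (\<sigma> y)) = (\<Sum>u\<in>S. A (\<sigma> x) (\<sigma> u) * mev S p A (\<sigma> u) (\<sigma> y))"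
      using sum.reindex_bij_betw[OF bij, of "\<lambda>u. A (\<sigma> x) u * mev S p A u (\<sigma> y)"] by simp
    also have "\<dots> = (\<Sum>u\<in>S. A x u * mev S p A u y)"
      using inv pCons.IH that by (intro sum.cong) auto
    finally show ?thesis using that sS by (simp add: mmul_def)
  qed
  show ?case using one mm by (simp add: mev_pCons)
qed

lemma commute_mev:
  assumes fin: "finite S" and c: "mmul S C A = mmul S A C"
  shows "mmul S C (mev S p A) = mmul S (mev S p A) C"
proof (induction p)
  case 0
  then show ?case by simp
next
  case (pCons a p)
  have "mmul S C (mev S (pCons a p) A) = (\<lambda>x y. a * mmul S C (mone S) x y + mmul S (mmul S C A) (mev S p A) x y)"
    by (simp add: mev_pCons mmul_add_right mmul_scale_right mmul_assoc[OF fin])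
  also have "\<dots> = (\<lambda>x y. a * mmul S (mone S) C x y + mmul S A (mmul S (mev S p A) C) x y)"
    by (simp add: c mmul_one_left[OF fin] mmul_one_right[OF fin] mmul_assoc[OF fin] pCons.IH)
  also have "\<dots> = mmul S (mev S (pCons a p) A) C"
    by (simp add: mev_pCons mmul_add_left mmul_scale_left mmul_assoc[OF fin])
  finally show ?case .
qed

definition herm :: "'a mt \<Rightarrow> bool" where
  "herm M \<longleftrightarrow> (\<forall>x y. M x y = cnj (M y x))"

definition realpoly :: "complex poly \<Rightarrow> bool" where
  "realpoly p \<longleftrightarrow> (\<forall>i. cnj (coeff p i) = coeff p i)"

lemma mev_herm:
  assumes fin: "finite S" and h: "\<forall>x\<in>S. \<forall>y\<in>S. A x y = cnj (A y x)" and r: "realpoly p"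
  shows "herm (mev S p A)"
  using r
proof (induction p)
  case 0
  then show ?case by (simp add: herm_def mz_def)
next
  case (pCons a p)
  have ra: "cnj a = a" using pCons.prems unfolding realpoly_def by (metis coeff_pCons_0)
  have rp: "realpoly p" using pCons.prems unfolding realpoly_def by (metis coeff_pCons_Suc)
  have hp: "herm (mev S p A)" using pCons.IH rp by simp
  have com: "mmul S A (mev S p A) = mmul S (mev S p A) A"
    by (rule commute_mev[OF fin]) simp
  have c: "cnj (mmul S A (mev S p A) y x) = mmul S (mev S p A) A x y" for x y
  proof (cases "x \<in> S \<and> y \<in> S")
    case True
    have "cnj (\<Sum>u\<in>S. A y u * mev S p A u x) = (\<Sum>u\<in>S. cnj (A y u) * cnj (mev S p A u x))"
      by simp
    also have "\<dots> = (\<Sum>u\<in>S. mev S p A x u * A u y)"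
    proof (rule sum.cong[OF refl])
      fix u assume "u \<in> S"
      then have "cnj (A y u) = A u y" "cnj (mev S p A u x) = mev S p A x u"
        using h True hp unfolding herm_def by (metis complex_cnj_cnj)+
      then show "cnj (A y u) * cnj (mev S p A u x) = mev S p A x u * A u y" by simp
    qed
    finally have "cnj (\<Sum>u\<in>S. A y u * mev S p A u x) = (\<Sum>u\<in>S. mev S p A x u * A u y)" .
    then show ?thesis using True by (simp add: mmul_def)
  next
    case False
    then show ?thesis by (auto simp: mmul_def)
  qed
  show ?case unfolding herm_def
  proof (intro allI)
    fix x y
    have "cnj (mev S (pCons a p) A y x) = cnj a * mone S x y + mmul S (mev S p A) A x y"
      by (auto simp: mev_pCons c mone_def)
    then show "mev S (pCons a p) A x y = cnj (mev S (pCons a p) A y x)"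
      using ra com by (simp add: mev_pCons)
  qed
qed

lemma mev_X: "finite S \<Longrightarrow> mev S [:0, 1:] A = rst S A"
  by (simp add: mev_pCons mmul_one_right mz_def)

lemma mev_lin: "finite S \<Longrightarrow> mev S [:-b, 1:] A = (\<lambda>x y. rst S A x y - b * mone S x y)"
  by (simp add: mev_pCons mmul_one_right mz_def fun_eq_iff)


lemma cnj_mult_self: "cnj z * z = complex_of_real ((cmod z)\<^sup>2)"
  by (metis complex_norm_square mult.commute of_real_power)

lemma sum_sq_zero:
  assumes "finite S" "(\<Sum>x\<in>S. cnj (v x) * v x) = 0"
  shows "\<forall>x\<in>S. v x = 0"
proof -
  have "(\<Sum>x\<in>S. cnj (v x) * v x) = complex_of_real (\<Sum>x\<in>S. (cmod (v x))\<^sup>2)"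
    by (simp only: cnj_mult_self of_real_sum)
  then have "complex_of_real (\<Sum>x\<in>S. (cmod (v x))\<^sup>2) = 0"
    using assms(2) by simp
  then have "(\<Sum>x\<in>S. (cmod (v x))\<^sup>2) = 0" by (simp only: of_real_eq_0_iff)
  then have "\<forall>x\<in>S. (cmod (v x))\<^sup>2 = 0"
    using sum_nonneg_eq_0_iff[OF assms(1), of "\<lambda>x. (cmod (v x))\<^sup>2"] by simp
  then show ?thesis by simp
qed

lemma mmul_lin_apply:
  assumes fin: "finite S" and x: "x \<in> S" and y: "y \<in> S"
  shows "mmul S (mev S [:-b, 1:] A) Y x y = (\<Sum>u\<in>S. A x u * Y u y) - b * Y x y"
proof -
  have "mmul S (mev S [:-b, 1:] A) Y x y = (\<Sum>u\<in>S. (rst S A x u - b * mone S x u) * Y u y)"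
    using x y by (simp add: mev_lin[OF fin] mmul_def)
  also have "\<dots> = (\<Sum>u\<in>S. A x u * Y u y - (if u = x then b * Y x y else 0))"
    using x by (intro sum.cong) (auto simp: rst_def mone_def algebra_simps)
  also have "\<dots> = (\<Sum>u\<in>S. A x u * Y u y) - b * Y x y"
    using x fin by (simp add: sum_subtractf)
  finally show ?thesis .
qed

lemma eig_nonneg:
  assumes fin: "finite S"
    and psd: "\<forall>v. 0 \<le> (\<Sum>x\<in>S. \<Sum>y\<in>S. cnj (v x) * A x y * v y)"
    and Y: "mmul S (mev S [:-b, 1:] A) Y = mz" and sY: "supp S Y" and b: "\<not> 0 \<le> b"
  shows "Y = mz"
proof -
  have ev: "(\<Sum>u\<in>S. A x u * Y u y) = b * Y x y" if "x \<in> S" "y \<in> S" for x y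
    using mmul_lin_apply[OF fin that, of b A Y] Y by (simp add: mz_def)
  have col: "\<forall>x\<in>S. Y x y0 = 0" if y0: "y0 \<in> S" for y0
  proof -
    define v where "v x = Y x y0" for x
    define r where "r = (\<Sum>x\<in>S. (cmod (v x))\<^sup>2)"
    have "(\<Sum>x\<in>S. \<Sum>y\<in>S. cnj (v x) * A x y * v y) = (\<Sum>x\<in>S. cnj (v x) * (\<Sum>y\<in>S. A x y * v y))"
      by (simp add: sum_distrib_left mult.assoc)
    also have "\<dots> = (\<Sum>x\<in>S. b * (cnj (v x) * v x))"
      using ev y0 by (intro sum.cong) (auto simp: v_def)
    also have "\<dots> = b * (\<Sum>x\<in>S. cnj (v x) * v x)"
      by (simp add: sum_distrib_left)
    also have "(\<Sum>x\<in>S. cnj (v x) * v x) = complex_of_real r"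
      unfolding r_def by (simp only: cnj_mult_self of_real_sum)
    finally have eq: "(\<Sum>x\<in>S. \<Sum>y\<in>S. cnj (v x) * A x y * v y) = b * complex_of_real r" .
    have pos: "0 \<le> b * complex_of_real r"
      using psd[rule_format, of v] unfolding eq .
    have r0: "r \<ge> 0" unfolding r_def by (intro sum_nonneg) auto
    show ?thesis
    proof (cases "r = 0")
      case True
      then have "(\<Sum>x\<in>S. cnj (v x) * v x) = 0"
        unfolding r_def by (simp only: cnj_mult_self flip: of_real_sum) simp
      then show ?thesis using sum_sq_zero[OF fin] by (simp add: v_def)
    next
      case False
      with r0 have rp: "r > 0" by simp
      have "Re (b * complex_of_real r) = Re b * r" "Im (b * complex_of_real r) = Im b * r"
        by simp_all
      with pos have "0 \<le> Re b * r" "Im b * r = 0"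
        by (simp_all add: less_eq_complex_def)
      then have "0 \<le> Re b" "Im b = 0" using rp
        by (simp_all add: zero_le_mult_iff)
      then have "0 \<le> b" by (simp add: less_eq_complex_def)
      with b show ?thesis by simp
    qed
  qed
  show ?thesis
  proof (intro ext)
    fix x y
    show "Y x y = mz x y"
    proof (cases "x \<in> S \<and> y \<in> S")
      case True then show ?thesis using col by (simp add: mz_def)
    next
      case False then show ?thesis using sY by (simp add: supp_def mz_def)
    qed
  qed
qed

lemma herm_sq_zero:
  assumes fin: "finite S" and H: "herm H" and Z: "mmul S H (mmul S H Y) = mz"
  shows "mmul S H Y = mz"
proof -
  define U where "U = mmul S H Y"
  have col: "\<forall>x\<in>S. U x y0 = 0" if y0: "y0 \<in> S" for y0
  proof -
    have "(\<Sum>x\<in>S. cnj (U x y0) * U x y0) = (\<Sum>x\<in>S. cnj (\<Sum>z\<in>S. H x z * Y z y0) * U x y0)"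
      using y0 by (intro sum.cong) (auto simp: U_def mmul_def)
    also have "\<dots> = (\<Sum>x\<in>S. \<Sum>z\<in>S. cnj (Y z y0) * (H z x * U x y0))"
    proof (intro sum.cong refl)
      fix x assume "x \<in> S"
      have "cnj (\<Sum>z\<in>S. H x z * Y z y0) * U x y0 = (\<Sum>z\<in>S. cnj (H x z) * cnj (Y z y0) * U x y0)"
        by (simp add: sum_distrib_right)
      also have "\<dots> = (\<Sum>z\<in>S. cnj (Y z y0) * (H z x * U x y0))"
      proof (intro sum.cong refl)
        fix z
        have "cnj (H x z) = H z x" using H unfolding herm_def by (metis complex_cnj_cnj)
        then show "cnj (H x z) * cnj (Y z y0) * U x y0 = cnj (Y z y0) * (H z x * U x y0)"
          by simp
      qed
      finally show "cnj (\<Sum>z\<in>S. H x z * Y z y0) * U x y0 = (\<Sum>z\<in>S. cnj (Y z y0) * (H z x * U x y0))" .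
    qed
    also have "\<dots> = (\<Sum>z\<in>S. cnj (Y z y0) * (\<Sum>x\<in>S. H z x * U x y0))"
      by (subst sum.swap) (simp add: sum_distrib_left)
    also have "\<dots> = (\<Sum>z\<in>S. cnj (Y z y0) * mmul S H U z y0)"
      using y0 by (intro sum.cong) (auto simp: mmul_def)
    also have "\<dots> = 0" using Z by (simp add: U_def mz_def)
    finally show ?thesis using sum_sq_zero[OF fin, of "\<lambda>x. U x y0"] by simp
  qed
  show ?thesis
  proof (intro ext)
    fix x y
    show "mmul S H Y x y = mz x y"
    proof (cases "x \<in> S \<and> y \<in> S")
      case True then show ?thesis using col by (simp add: mz_def U_def)
    next
      case False then show ?thesis by (auto simp: mz_def mmul_def)
    qed
  qed
qed

lemma mm_ev: "finite S \<Longrightarrow> mmul S (mev S (p * q) A) X = mmul S (mev S p A) (mmul S (mev S q A) X)"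
  by (simp add: mev_mult mmul_assoc)

lemma realpoly_lin: "cnj b = b \<Longrightarrow> realpoly [:-b, 1:]"
  by (auto simp: realpoly_def coeff_pCons split: nat.split)

lemma reduce:
  fixes d :: nat and r :: "nat \<Rightarrow> complex"
  assumes fin: "finite S" and h: "\<forall>x\<in>S. \<forall>y\<in>S. A x y = cnj (A y x)"
    and psd: "\<forall>v. 0 \<le> (\<Sum>x\<in>S. \<Sum>y\<in>S. cnj (v x) * A x y * v y)"
  shows "mmul S (mev S (\<Prod>i<d. [:- r i, 1:]) A) X = mz \<Longrightarrow>
         mmul S (mev S (\<Prod>a\<in>{r i |i. i < d \<and> 0 \<le> r i}. [:- a, 1:]) A) X = mz"
proof (induction d arbitrary: X)
  case 0
  then show ?case by simp
next
  case (Suc d)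
  let ?L = "[:- r d, 1:]"
  let ?P = "\<Prod>i<d. [:- r i, 1:]"
  define G where "G = {r i |i. i < d \<and> 0 \<le> r i}"
  have finG: "finite G" unfolding G_def by simp
  let ?F = "\<lambda>T. \<Prod>a\<in>T. [:- a, 1:]"
  have pr: "(\<Prod>i<Suc d. [:- r i, 1:]) = ?P * ?L" by (simp only: prod.lessThan_Suc)
  have prem: "mmul S (mev S (?P * ?L) A) X = mz" using Suc.prems unfolding pr .
  then have "mmul S (mev S (?L * ?P) A) X = mz" by (metis mult.commute)
  then have hyp: "mmul S (mev S ?L A) (mmul S (mev S ?P A) X) = mz"
    by (simp only: mm_ev[OF fin])
  show ?case
  proof (cases "0 \<le> r d")
    case False
    have "mmul S (mev S ?P A) X = mz"
      by (rule eig_nonneg[OF fin psd hyp]) (use False in simp_all)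
    then have "mmul S (mev S (?F G) A) X = mz" using Suc.IH G_def by simp
    moreover have "{r i |i. i < Suc d \<and> 0 \<le> r i} = G"
      using False unfolding G_def by (auto simp: less_Suc_eq)
    ultimately show ?thesis by simp
  next
    case True
    have realb: "cnj (r d) = r d" using True by (simp add: less_eq_complex_def complex_eq_iff)
    have hL: "herm (mev S ?L A)" by (rule mev_herm[OF fin h realpoly_lin[OF realb]])
    have "mmul S (mev S ?P A) (mmul S (mev S ?L A) X) = mz"
      using prem by (simp only: mm_ev[OF fin])
    then have IH: "mmul S (mev S (?F G) A) (mmul S (mev S ?L A) X) = mz"
      using Suc.IH G_def by simp
    have setG: "{r i |i. i < Suc d \<and> 0 \<le> r i} = insert (r d) G"
      using True unfolding G_def by (auto simp: less_Suc_eq)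
    show ?thesis
    proof (cases "r d \<in> G")
      case False
      have "?F (insert (r d) G) = ?F G * ?L" using False finG by (simp add: prod.insert mult.commute)
      then have "mmul S (mev S (?F (insert (r d) G)) A) X = mz"
        using IH by (simp only: mm_ev[OF fin])
      then show ?thesis using setG by (simp only:)
    next
      case True
      have FG: "?F G = ?L * ?F (G - {r d})"
        using True finG by (simp add: prod.remove)
      define W where "W = mmul S (mev S (?F (G - {r d})) A) X"
      have "mmul S (mev S (?F G) A) (mmul S (mev S ?L A) X)
          = mmul S (mev S ?L A) (mmul S (mev S (?F (G - {r d})) A) (mmul S (mev S ?L A) X))"
        unfolding FG by (rule mm_ev[OF fin])
      also have "mmul S (mev S (?F (G - {r d})) A) (mmul S (mev S ?L A) X)
          = mmul S (mev S (?F (G - {r d}) * ?L) A) X"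
        by (rule mm_ev[OF fin, symmetric])
      also have "?F (G - {r d}) * ?L = ?L * ?F (G - {r d})" by (rule mult.commute)
      also have "mmul S (mev S (?L * ?F (G - {r d})) A) X = mmul S (mev S ?L A) W"
        unfolding W_def by (rule mm_ev[OF fin])
      finally have "mmul S (mev S (?F G) A) (mmul S (mev S ?L A) X)
          = mmul S (mev S ?L A) (mmul S (mev S ?L A) W)" .
      then have "mmul S (mev S ?L A) W = mz"
        using herm_sq_zero[OF fin hL] IH by simp
      then have "mmul S (mev S (?F G) A) X = mz"
        unfolding FG W_def by (simp only: mm_ev[OF fin])
      then show ?thesis using setG True by (simp add: insert_absorb)
    qed
  qed
qed


definition msc :: "complex \<Rightarrow> 'a mt \<Rightarrow> 'a mt" where
  "msc c M = (\<lambda>x y. c * M x y)"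

interpretation mvs: vector_space msc
  by unfold_locales (auto simp: msc_def fun_eq_iff algebra_simps)

lemma sum_fun_apply2: "(sum f I :: 'a mt) x y = (\<Sum>i\<in>I. f i x y)"
  by (induction I rule: infinite_finite_induct) auto

definition em :: "'a \<Rightarrow> 'a \<Rightarrow> 'a mt" where
  "em s t = (\<lambda>x y. if x = s \<and> y = t then 1 else 0)"

lemma supp_in_span:
  assumes fin: "finite S" and M: "supp S M"
  shows "M \<in> mvs.span ((\<lambda>(s,t). em s t) ` (S \<times> S))"
proof -
  have eq: "M = (\<Sum>p\<in>S \<times> S. msc (M (fst p) (snd p)) (em (fst p) (snd p)))"
  proof (intro ext)
    fix x y
    have "(\<Sum>p\<in>S \<times> S. msc (M (fst p) (snd p)) (em (fst p) (snd p))) x y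
        = (\<Sum>p\<in>S \<times> S. if p = (x, y) then M x y else 0)"
      unfolding sum_fun_apply2 by (intro sum.cong) (auto simp: msc_def em_def)
    also have "\<dots> = (if (x, y) \<in> S \<times> S then M x y else 0)"
      using fin by (simp add: sum.delta')
    also have "\<dots> = M x y" using M by (auto simp: supp_def)
    finally show "M x y = (\<Sum>p\<in>S \<times> S. msc (M (fst p) (snd p)) (em (fst p) (snd p))) x y" by simp
  qed
  show ?thesis
    by (subst eq, intro mvs.span_sum mvs.span_scale mvs.span_base) auto
qed

lemma mev_sum: "mev S (sum f I) A = (\<lambda>x y. \<Sum>i\<in>I. mev S (f i) A x y)"
  by (induction I rule: infinite_finite_induct) (auto simp: mev_add mz_def)

lemma annih:
  assumes fin: "finite S"
  shows "\<exists>q. q \<noteq> 0 \<and> mev S q A = mz"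
proof (cases "inj_on (mpow S A) {..card S * card S}")
  case False
  then obtain i j where ij: "i \<noteq> j" "mpow S A i = mpow S A j"
    unfolding inj_on_def by blast
  define q where "q = monom (1::complex) i - monom 1 j"
  have "coeff q i = 1" using ij by (simp add: q_def coeff_monom)
  then have "q \<noteq> 0" by auto
  moreover have "mev S q A = mz"
    using ij by (simp add: q_def mev_diff mev_monom mz_def)
  ultimately show ?thesis by blast
next
  case True
  let ?K = "card S * card S"
  let ?P = "mpow S A"
  define X where "X = ?P ` {..?K}"
  define T where "T = (\<lambda>(s,t). em s t) ` (S \<times> S)"
  have finT: "finite T" unfolding T_def using fin by simp
  have cT: "card T \<le> ?K" unfolding T_def
    using card_image_le[of "S \<times> S" "\<lambda>(s,t). em s t"] fin by (simp add: card_cartesian_product)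
  have cX: "card X = Suc ?K" unfolding X_def using card_image[OF True] by simp
  have finX: "finite X" unfolding X_def by simp
  have sp: "X \<subseteq> mvs.span T" unfolding X_def T_def using supp_in_span[OF fin] by auto
  have "mvs.dependent X"
  proof (rule ccontr)
    assume "\<not> mvs.dependent X"
    then have "card X \<le> card T" using mvs.independent_span_bound[OF finT _ sp] by simp
    with cT cX show False by simp
  qed
  then obtain u where u: "\<exists>v\<in>X. u v \<noteq> 0" "(\<Sum>v\<in>X. msc (u v) v) = 0"
    using mvs.dependent_finite[OF finX] by blast
  define q where "q = (\<Sum>i\<le>?K. monom (u (?P i)) i)"
  have "mev S q A = (\<lambda>x y. \<Sum>i\<le>?K. u (?P i) * ?P i x y)"
    by (simp add: q_def mev_sum mev_monom)
  also have "\<dots> = (\<lambda>x y. \<Sum>v\<in>X. u v * v x y)"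
    unfolding X_def using sum.reindex[OF True, of "\<lambda>v. u v * v _ _"] by (simp add: fun_eq_iff)
  also have "\<dots> = (\<Sum>v\<in>X. msc (u v) v)"
    by (simp add: fun_eq_iff sum_fun_apply2 msc_def)
  also have "\<dots> = mz" using u(2) by (simp add: mz_def fun_eq_iff)
  finally have ev: "mev S q A = mz" .
  from u(1) obtain i0 where i0: "i0 \<le> ?K" "u (?P i0) \<noteq> 0" unfolding X_def by auto
  have "coeff q i0 = (\<Sum>i\<le>?K. if i = i0 then u (?P i) else 0)"
    by (simp add: q_def coeff_sum coeff_monom)
  also have "\<dots> = u (?P i0)" using i0 by simp
  finally have "q \<noteq> 0" using i0 by auto
  with ev show ?thesis by blast
qed

lemma interp:
  fixes f :: "real \<Rightarrow> real"
  assumes "finite T"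
  shows "\<exists>p. \<forall>t\<in>T. poly p t = f t"
  using assms
proof (induction T rule: finite_induct)
  case empty
  then show ?case by auto
next
  case (insert a T)
  then obtain p where p: "\<forall>t\<in>T. poly p t = f t" by auto
  define w where "w = (\<Prod>t\<in>T. [:- t, 1:])"
  have wt: "poly w t = 0" if "t \<in> T" for t
    using that insert.hyps(1) by (simp add: w_def poly_prod prod_zero_iff)
  have wa: "poly w a \<noteq> 0"
    using insert.hyps by (auto simp: w_def poly_prod prod_zero_iff)
  define p' where "p' = p + smult ((f a - poly p a) / poly w a) w"
  have "\<forall>t\<in>insert a T. poly p' t = f t"
    using p wt wa by (auto simp: p'_def)
  then show ?case by blast
qed

lemma prod_lin_dvd:
  fixes q :: "complex poly"
  assumes "finite G" "\<forall>a\<in>G. poly q a = 0"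
  shows "(\<Prod>a\<in>G. [:- a, 1:]) dvd q"
  using assms
proof (induction G arbitrary: q rule: finite_induct)
  case empty
  then show ?case by simp
next
  case (insert a G)
  then have "[:- a, 1:] dvd q" by (simp add: poly_eq_0_iff_dvd)
  then obtain q' where q': "q = [:- a, 1:] * q'" by (auto elim: dvdE)
  have "\<forall>g\<in>G. poly q' g = 0"
  proof
    fix g assume g: "g \<in> G"
    then have "g \<noteq> a" using insert.hyps by auto
    moreover have "poly q g = 0" using insert.prems g by auto
    ultimately show "poly q' g = 0" using q' by simp
  qed
  then have "(\<Prod>a\<in>G. [:- a, 1:]) dvd q'" using insert.IH by blast
  moreover have "(\<Prod>a\<in>insert a G. [:- a, 1:]) = [:- a, 1:] * (\<Prod>a\<in>G. [:- a, 1:])"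
    using insert.hyps by (rule prod.insert)
  ultimately show ?case using q' by (metis dvd_refl mult_dvd_mono)
qed

lemma poly_of_real_map: "poly (map_poly complex_of_real p) (of_real x) = of_real (poly p x)"
  by (induction p) (auto simp: map_poly_pCons)

lemma sqrt_ex:
  assumes fin: "finite S" and h: "\<forall>x\<in>S. \<forall>y\<in>S. A x y = cnj (A y x)"
    and psd: "\<forall>v. 0 \<le> (\<Sum>x\<in>S. \<Sum>y\<in>S. cnj (v x) * A x y * v y)"
  shows "\<exists>p. realpoly p \<and> coeff p 0 = 0 \<and> mmul S (mev S p A) (mev S p A) = rst S A"
proof -
  obtain q where q: "q \<noteq> 0" "mev S q A = mz" using annih[OF fin] by blast
  obtain root where rt: "smult (lead_coeff q) (\<Prod>i<degree q. [:- root i, 1:]) = q"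
    using complex_poly_decompose' by blast
  let ?P = "\<Prod>i<degree q. [:- root i, 1:]"
  have lc: "lead_coeff q \<noteq> 0" using q(1) by simp
  have "mev S q A = (\<lambda>x y. lead_coeff q * mev S ?P A x y)"
    using rt mev_smult by metis
  then have "\<forall>x y. lead_coeff q * mev S ?P A x y = 0" using q(2) by (simp add: mz_def fun_eq_iff)
  then have "mev S ?P A = mz" using lc by (simp add: mz_def fun_eq_iff)
  then have "mmul S (mev S ?P A) (mone S) = mz" by simp
  then have "mmul S (mev S (\<Prod>a\<in>{root i |i. i < degree q \<and> 0 \<le> root i}. [:- a, 1:]) A) (mone S) = mz"
    by (rule reduce[OF fin h psd])
  moreover define G where "G = {root i |i. i < degree q \<and> 0 \<le> root i}"
  ultimately have "mmul S (mev S (\<Prod>a\<in>G. [:- a, 1:]) A) (mone S) = mz" by simp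
  then have FG0: "mev S (\<Prod>a\<in>G. [:- a, 1:]) A = mz"
    by (simp add: mmul_one_right[OF fin] supp_rst_eq)
  have finG: "finite G" unfolding G_def by simp
  have Gre: "a = complex_of_real (Re a) \<and> 0 \<le> Re a" if "a \<in> G" for a
  proof -
    have "0 \<le> a" using that unfolding G_def by auto
    then show ?thesis by (simp add: less_eq_complex_def complex_eq_iff)
  qed
  obtain pr where pr: "\<forall>t\<in>insert 0 (Re ` G). poly pr t = sqrt t"
    using interp[of "insert 0 (Re ` G)" sqrt] finG by auto
  define pc where "pc = map_poly complex_of_real pr"
  have van: "\<forall>a\<in>G. poly (pc * pc - [:0, 1:]) a = 0"
  proof
    fix a assume a: "a \<in> G"
    have "poly pc a = poly pc (complex_of_real (Re a))" using Gre[OF a] by simp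
    also have "\<dots> = complex_of_real (sqrt (Re a))"
      unfolding pc_def poly_of_real_map using pr a by simp
    finally have "poly pc a * poly pc a = complex_of_real (sqrt (Re a) * sqrt (Re a))"
      by (simp only: of_real_mult)
    also have "\<dots> = a"
    proof -
      have "sqrt (Re a) * sqrt (Re a) = Re a" using Gre[OF a] by simp
      then show ?thesis using Gre[OF a] by simp
    qed
    finally show "poly (pc * pc - [:0, 1:]) a = 0" by simp
  qed
  obtain r where r: "pc * pc - [:0, 1:] = (\<Prod>a\<in>G. [:- a, 1:]) * r"
    using prod_lin_dvd[OF finG van] by (auto elim: dvdE)
  have "mev S (pc * pc - [:0, 1:]) A = mz"
    unfolding r by (simp add: mev_mult[OF fin] FG0)
  then have "\<forall>x y. mmul S (mev S pc A) (mev S pc A) x y - rst S A x y = 0"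
    by (simp add: mev_diff mev_mult[OF fin] mev_X[OF fin] mz_def fun_eq_iff)
  then have sq: "mmul S (mev S pc A) (mev S pc A) = rst S A" by (simp add: fun_eq_iff)
  have rp: "realpoly pc" unfolding realpoly_def pc_def by (simp add: coeff_map_poly)
  have "coeff pc 0 = complex_of_real (poly pr 0)"
    unfolding pc_def by (simp add: coeff_map_poly poly_0_coeff_0)
  also have "\<dots> = 0" using pr by simp
  finally show ?thesis using sq rp by blast
qed


lemma finite_idx: "finite (idx n D)"
proof -
  have "idx n D = {xs. set xs \<subseteq> {..<D} \<and> length xs = n}" by (auto simp: idx_def)
  then show ?thesis using finite_lists_length_eq[of "{..<D}" n] by simp
qed

lemma idx_Suc: "idx (Suc n) D = (\<lambda>(c, u). c # u) ` ({..<D} \<times> idx n D)"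
proof (intro set_eqI iffI)
  fix xs assume "xs \<in> idx (Suc n) D"
  then obtain c u where "xs = c # u" "length u = n" "c < D" "set u \<subseteq> {..<D}"
    by (auto simp: idx_def length_Suc_conv)
  then show "xs \<in> (\<lambda>(c, u). c # u) ` ({..<D} \<times> idx n D)"
    by (auto simp: idx_def image_iff)
qed (auto simp: idx_def)

lemma sumprod:
  "(\<Sum>u\<in>idx n D. \<Prod>i<n. f i (u ! i)) = (\<Prod>i<n. \<Sum>c<D. (f i c :: complex))"
proof (induction n arbitrary: f)
  case 0
  have "idx 0 D = {[]}" by (auto simp: idx_def)
  then show ?case by simp
next
  case (Suc n)
  have inj: "inj_on (\<lambda>(c, u). c # u) ({..<D} \<times> idx n D)" by (auto simp: inj_on_def)
  have "(\<Sum>u\<in>idx (Suc n) D. \<Prod>i<Suc n. f i (u ! i))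
      = (\<Sum>p\<in>{..<D} \<times> idx n D. \<Prod>i<Suc n. f i ((fst p # snd p) ! i))"
    unfolding idx_Suc by (subst sum.reindex[OF inj]) (simp add: case_prod_beta)
  also have "\<dots> = (\<Sum>p\<in>{..<D} \<times> idx n D. f 0 (fst p) * (\<Prod>i<n. f (Suc i) (snd p ! i)))"
    by (simp only: prod.lessThan_Suc_shift nth_Cons_0 nth_Cons_Suc)
  also have "\<dots> = (\<Sum>c<D. \<Sum>u\<in>idx n D. f 0 c * (\<Prod>i<n. f (Suc i) (u ! i)))"
    by (simp add: sum.cartesian_product case_prod_beta)
  also have "\<dots> = (\<Sum>c<D. f 0 c) * (\<Prod>i<n. \<Sum>c<D. f (Suc i) c)"
  proof -
    have "(\<Sum>c<D. \<Sum>u\<in>idx n D. f 0 c * (\<Prod>i<n. f (Suc i) (u ! i)))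
        = (\<Sum>c<D. f 0 c * (\<Sum>u\<in>idx n D. \<Prod>i<n. f (Suc i) (u ! i)))"
      by (simp only: sum_distrib_left)
    also have "\<dots> = (\<Sum>c<D. f 0 c * (\<Prod>i<n. \<Sum>c<D. f (Suc i) c))"
      using Suc.IH[of "\<lambda>i. f (Suc i)"] by simp
    finally show ?thesis by (simp only: sum_distrib_right)
  qed
  also have "\<dots> = (\<Prod>i<Suc n. \<Sum>c<D. f i c)"
    by (simp only: prod.lessThan_Suc_shift)
  finally show ?case .
qed

lemma idx_nth: "xs \<in> idx n D \<Longrightarrow> i < n \<Longrightarrow> xs ! i < D"
  by (auto simp: idx_def subset_iff)

lemma TT:
  assumes orth: "\<forall>i<k. orth_proj D (Proj i)"
    and perp: "\<forall>i<k. \<forall>j<k. i \<noteq> j \<longrightarrow> (\<forall>a<D. \<forall>b<D. (\<Sum>c<D. Proj i a c * Proj j c b) = 0)"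
    and js: "js \<in> idx n k" and js': "js' \<in> idx n k"
  shows "mmul (idx n D) (tensor_proj Proj js) (tensor_proj Proj js') =
         (if js = js' then rst (idx n D) (tensor_proj Proj js) else mz)"
proof (intro ext)
  fix x y
  show "mmul (idx n D) (tensor_proj Proj js) (tensor_proj Proj js') x y =
         (if js = js' then rst (idx n D) (tensor_proj Proj js) else mz) x y"
  proof (cases "x \<in> idx n D \<and> y \<in> idx n D")
    case False then show ?thesis by (auto simp: mmul_def rst_def mz_def)
  next
    case True
    have ljs: "length js = n" "length js' = n" using js js' by (auto simp: idx_def)
    have "mmul (idx n D) (tensor_proj Proj js) (tensor_proj Proj js') x y
        = (\<Sum>u\<in>idx n D. \<Prod>i<n. Proj (js ! i) (x ! i) (u ! i) * Proj (js' ! i) (u ! i) (y ! i))"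
      using True ljs by (simp add: mmul_def tensor_proj_def prod.distrib)
    also have "\<dots> = (\<Prod>i<n. \<Sum>c<D. Proj (js ! i) (x ! i) c * Proj (js' ! i) c (y ! i))"
      by (rule sumprod)
    also have "\<dots> = (\<Prod>i<n. if js ! i = js' ! i then Proj (js ! i) (x ! i) (y ! i) else 0)"
    proof (intro prod.cong refl)
      fix i assume "i \<in> {..<n}"
      then have i: "i < n" by simp
      have a: "x ! i < D" "y ! i < D" using True i by (auto intro: idx_nth)
      have b: "js ! i < k" "js' ! i < k" using js js' i by (auto intro: idx_nth)
      show "(\<Sum>c<D. Proj (js ! i) (x ! i) c * Proj (js' ! i) c (y ! i)) =
            (if js ! i = js' ! i then Proj (js ! i) (x ! i) (y ! i) else 0)"
      proof (cases "js ! i = js' ! i")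
        case True
        have "\<forall>a<D. \<forall>b<D. (\<Sum>c<D. Proj (js ! i) a c * Proj (js ! i) c b) = Proj (js ! i) a b"
          using orth b unfolding orth_proj_def by blast
        then show ?thesis using True a by simp
      next
        case False
        then have "\<forall>a<D. \<forall>b<D. (\<Sum>c<D. Proj (js ! i) a c * Proj (js' ! i) c b) = 0"
          using perp b by blast
        then show ?thesis using False a by simp
      qed
    qed
    also have "\<dots> = (if js = js' then tensor_proj Proj js x y else 0)"
    proof (cases "js = js'")
      case True then show ?thesis using ljs by (simp add: tensor_proj_def)
    next
      case False
      then obtain i where "i < n" "js ! i \<noteq> js' ! i" using ljs nth_equalityI by metis
      then show ?thesis using False by (auto intro!: prod_zero)
    qed
    finally show ?thesis using True by (simp add: rst_def mz_def)
  qed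
qed


lemma delta_mat:
  assumes "finite J" "j \<in> J"
  shows "(\<Sum>j'\<in>J. (if j = j' then M else mz) x y) = M x y"
proof -
  have "(\<Sum>j'\<in>J. (if j = j' then M else mz) x y) = (\<Sum>j'\<in>J. if j = j' then M x y else 0)"
    by (intro sum.cong) (auto simp: mz_def)
  also have "\<dots> = M x y" using assms by simp
  finally show ?thesis .
qed

lemma block_rst:
  assumes bd: "iid_block_diag n D k Proj \<rho>"
  shows "rst (idx n D) \<rho> = (\<lambda>x y. \<Sum>j\<in>idx n k. mmul (idx n D) (mmul (idx n D) (tensor_proj Proj j) \<rho>) (tensor_proj Proj j) x y)"
proof (intro ext)
  fix x y
  let ?S = "idx n D"
  let ?T = "tensor_proj Proj"
  show "rst ?S \<rho> x y = (\<Sum>j\<in>idx n k. mmul ?S (mmul ?S (?T j) \<rho>) (?T j) x y)"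
  proof (cases "x \<in> ?S \<and> y \<in> ?S")
    case False then show ?thesis by (auto simp: rst_def mmul_def)
  next
    case True
    have "mmul ?S (mmul ?S (?T j) \<rho>) (?T j) x y = (\<Sum>u\<in>?S. \<Sum>w\<in>?S. ?T j x u * \<rho> u w * ?T j w y)" for j
    proof -
      have "mmul ?S (mmul ?S (?T j) \<rho>) (?T j) x y = (\<Sum>w\<in>?S. (\<Sum>u\<in>?S. ?T j x u * \<rho> u w) * ?T j w y)"
        using True by (simp add: mmul_def cong: sum.cong)
      also have "\<dots> = (\<Sum>w\<in>?S. \<Sum>u\<in>?S. ?T j x u * \<rho> u w * ?T j w y)"
        by (simp add: sum_distrib_right)
      also have "\<dots> = (\<Sum>u\<in>?S. \<Sum>w\<in>?S. ?T j x u * \<rho> u w * ?T j w y)"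
        by (rule sum.swap)
      finally show ?thesis .
    qed
    then show ?thesis using bd True unfolding iid_block_diag_def by (simp add: rst_def)
  qed
qed

lemma commute_T:
  assumes orth: "\<forall>i<k. orth_proj D (Proj i)"
    and perp: "\<forall>i<k. \<forall>j<k. i \<noteq> j \<longrightarrow> (\<forall>a<D. \<forall>b<D. (\<Sum>c<D. Proj i a c * Proj j c b) = 0)"
    and bd: "iid_block_diag n D k Proj \<rho>" and j: "j \<in> idx n k"
  shows "mmul (idx n D) (tensor_proj Proj j) \<rho> = mmul (idx n D) (mmul (idx n D) (tensor_proj Proj j) \<rho>) (tensor_proj Proj j)"
    and "mmul (idx n D) \<rho> (tensor_proj Proj j) = mmul (idx n D) (mmul (idx n D) (tensor_proj Proj j) \<rho>) (tensor_proj Proj j)"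
proof -
  let ?S = "idx n D"
  let ?J = "idx n k"
  let ?T = "tensor_proj Proj"
  let ?M = "mmul ?S (mmul ?S (?T j) \<rho>) (?T j)"
  have fS: "finite ?S" and fJ: "finite ?J" by (simp_all add: finite_idx)
  have TT': "mmul ?S (?T j) (?T j') = (if j = j' then rst ?S (?T j) else mz)" if "j' \<in> ?J" for j'
    by (rule TT[OF orth perp j that])
  have TT'': "mmul ?S (?T j') (?T j) = (if j = j' then rst ?S (?T j) else mz)" if "j' \<in> ?J" for j'
    using TT[OF orth perp that j] by auto
  have "mmul ?S (?T j) \<rho> = mmul ?S (?T j) (rst ?S \<rho>)" by simp
  also have "\<dots> = (\<lambda>x y. \<Sum>j'\<in>?J. mmul ?S (?T j) (mmul ?S (mmul ?S (?T j') \<rho>) (?T j')) x y)"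
    unfolding block_rst[OF bd] mmul_sum_right ..
  also have "\<dots> = (\<lambda>x y. \<Sum>j'\<in>?J. (if j = j' then ?M else mz) x y)"
  proof (intro ext sum.cong refl)
    fix x y j' assume j': "j' \<in> ?J"
    have "mmul ?S (?T j) (mmul ?S (mmul ?S (?T j') \<rho>) (?T j')) = mmul ?S (mmul ?S (?T j) (?T j')) (mmul ?S \<rho> (?T j'))"
      by (simp add: mmul_assoc[OF fS])
    also have "\<dots> = (if j = j' then ?M else mz)"
      using TT'[OF j'] by (auto simp: mmul_assoc[OF fS])
    finally show "mmul ?S (?T j) (mmul ?S (mmul ?S (?T j') \<rho>) (?T j')) x y = (if j = j' then ?M else mz) x y"
      by simp
  qed
  also have "\<dots> = ?M" by (intro ext) (rule delta_mat[OF fJ j])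
  finally show "mmul ?S (?T j) \<rho> = ?M" .
  have "mmul ?S \<rho> (?T j) = mmul ?S (rst ?S \<rho>) (?T j)" by simp
  also have "\<dots> = (\<lambda>x y. \<Sum>j'\<in>?J. mmul ?S (mmul ?S (mmul ?S (?T j') \<rho>) (?T j')) (?T j) x y)"
    unfolding block_rst[OF bd] mmul_sum_left ..
  also have "\<dots> = (\<lambda>x y. \<Sum>j'\<in>?J. (if j = j' then ?M else mz) x y)"
  proof (intro ext sum.cong refl)
    fix x y j' assume j': "j' \<in> ?J"
    have "mmul ?S (mmul ?S (mmul ?S (?T j') \<rho>) (?T j')) (?T j) = mmul ?S (mmul ?S (?T j') \<rho>) (mmul ?S (?T j') (?T j))"
      by (simp add: mmul_assoc[OF fS])
    also have "\<dots> = (if j = j' then ?M else mz)"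
      using TT''[OF j'] by auto
    finally show "mmul ?S (mmul ?S (mmul ?S (?T j') \<rho>) (?T j')) (?T j) x y = (if j = j' then ?M else mz) x y"
      by simp
  qed
  also have "\<dots> = ?M" by (intro ext) (rule delta_mat[OF fJ j])
  finally show "mmul ?S \<rho> (?T j) = ?M" .
qed


lemma perm_bij:
  assumes pi: "\<pi> permutes {..<n}"
  shows "bij_betw (permute_list \<pi>) (idx n D) (idx n D)"
proof (rule bij_betw_byWitness[where f' = "permute_list (inv \<pi>)"])
  have pinv: "inv \<pi> permutes {..<n}" using permutes_inv[OF pi] .
  show "\<forall>a\<in>idx n D. permute_list (inv \<pi>) (permute_list \<pi> a) = a"
  proof
    fix a assume "a \<in> idx n D"
    then have l: "length a = n" by (simp add: idx_def)
    have "permute_list (inv \<pi>) (permute_list \<pi> a) = permute_list (\<pi> \<circ> inv \<pi>) a"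
      using permute_list_compose[of "inv \<pi>" a \<pi>] pinv l by simp
    also have "\<pi> \<circ> inv \<pi> = id" using permutes_inv_o(1)[OF pi] .
    finally show "permute_list (inv \<pi>) (permute_list \<pi> a) = a" by simp
  qed
  show "\<forall>a\<in>idx n D. permute_list \<pi> (permute_list (inv \<pi>) a) = a"
  proof
    fix a assume "a \<in> idx n D"
    then have l: "length a = n" by (simp add: idx_def)
    have "permute_list \<pi> (permute_list (inv \<pi>) a) = permute_list (inv \<pi> \<circ> \<pi>) a"
      using permute_list_compose[of \<pi> a "inv \<pi>"] pi l by simp
    also have "inv \<pi> \<circ> \<pi> = id" using permutes_inv_o(2)[OF pi] .
    finally show "permute_list \<pi> (permute_list (inv \<pi>) a) = a" by simp
  qed
  show "permute_list \<pi> ` idx n D \<subseteq> idx n D"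
    using pi by (auto simp: idx_def)
  show "permute_list (inv \<pi>) ` idx n D \<subseteq> idx n D"
    using permutes_inv[OF pi] by (auto simp: idx_def)
qed

lemma tp_finite:
  assumes fin: "finite L" and vs: "\<forall>l\<in>L. \<forall>i<n. vs l i \<in> V"
  shows "(\<lambda>ps. \<Sum>l\<in>L. c l * prod_vec n (vs l) ps) \<in> tensor_pow n V"
proof -
  obtain h where h: "bij_betw h {0..<card L} L" using ex_bij_betw_nat_finite[OF fin] by blast
  have "(\<lambda>ps. \<Sum>l\<in>L. c l * prod_vec n (vs l) ps) = (\<lambda>ps. \<Sum>l<card L. c (h l) * prod_vec n (vs (h l)) ps)"
  proof (intro ext)
    fix ps
    show "(\<Sum>l\<in>L. c l * prod_vec n (vs l) ps) = (\<Sum>l<card L. c (h l) * prod_vec n (vs (h l)) ps)"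
      using sum.reindex_bij_betw[OF h, of "\<lambda>l. c l * prod_vec n (vs l) ps"]
      by (simp add: lessThan_atLeast0)
  qed
  moreover have "\<forall>l<card L. \<forall>i<n. vs (h l) i \<in> V"
  proof (intro allI impI)
    fix l i assume "l < card L" "i < n"
    then have "h l \<in> L" using h by (auto simp: bij_betw_def)
    then show "vs (h l) i \<in> V" using vs \<open>i < n\<close> by blast
  qed
  ultimately show ?thesis unfolding tensor_pow_def
    by (intro CollectI exI[of _ "card L"] exI[of _ "c \<circ> h"] exI[of _ "vs \<circ> h"]) auto
qed

lemma V_mem:
  assumes j: "j < k" and uu: "uu < D" and ww: "ww < D" and o: "orth_proj D (Proj j)"
  shows "(\<lambda>(a, b). if a < D \<and> b < D then Proj j a uu * Proj j ww b else 0)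
     \<in> sum_sub k (\<lambda>i. tensor_sub (range_op D (Proj i)) (range_op D (conj_op (Proj i))))"
proof -
  define u0 where "u0 = (\<lambda>a. if a < D then Proj j a uu else 0)"
  define w0 where "w0 = (\<lambda>b. if b < D then Proj j ww b else 0)"
  have u0r: "u0 \<in> range_op D (Proj j)"
  proof -
    have "u0 = (\<lambda>a. if a < D then (\<Sum>b<D. Proj j a b * (if b = uu then 1 else 0)) else 0)"
      using uu by (auto simp: u0_def fun_eq_iff if_distrib cong: if_cong)
    then show ?thesis unfolding range_op_def by (intro CollectI exI[of _ "\<lambda>b. if b = uu then 1 else 0"])
  qed
  have w0r: "w0 \<in> range_op D (conj_op (Proj j))"
  proof -
    have herm: "Proj j ww b = cnj (Proj j b ww)" if "b < D" for b
      using o ww that unfolding orth_proj_def by blast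
    have "w0 = (\<lambda>b. if b < D then (\<Sum>c<D. conj_op (Proj j) b c * (if c = ww then 1 else 0)) else 0)"
      using ww herm by (auto simp: w0_def fun_eq_iff conj_op_def if_distrib cong: if_cong)
    then show ?thesis unfolding range_op_def by (intro CollectI exI[of _ "\<lambda>c. if c = ww then 1 else 0"])
  qed
  define t where "t = (\<lambda>(a, b). if a < D \<and> b < D then Proj j a uu * Proj j ww b else (0::complex))"
  have tt: "t \<in> tensor_sub (range_op D (Proj j)) (range_op D (conj_op (Proj j)))"
    unfolding tensor_sub_def
  proof (intro CollectI exI conjI)
    show "\<forall>l<1. (\<lambda>_. u0) l \<in> range_op D (Proj j) \<and> (\<lambda>_. w0) l \<in> range_op D (conj_op (Proj j))"
      using u0r w0r by simp
    show "t = (\<lambda>(a, b). \<Sum>l<(1::nat). (\<lambda>_. 1) l * (\<lambda>_. u0) l a * (\<lambda>_. w0) l b)"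
      by (auto simp: t_def u0_def w0_def fun_eq_iff)
  qed
  have z: "(\<lambda>_. 0) \<in> tensor_sub U W" for U W
    unfolding tensor_sub_def
    by (intro CollectI exI[of _ "0::nat"] exI[of _ "\<lambda>_. 0"]) (auto simp: fun_eq_iff)
  define ts where "ts = (\<lambda>i. if i = j then t else (\<lambda>_. 0))"
  have "t = (\<lambda>p. \<Sum>i<k. ts i p)"
  proof (intro ext)
    fix p
    have "(\<Sum>i<k. ts i p) = (\<Sum>i<k. if i = j then t p else 0)"
      by (intro sum.cong) (auto simp: ts_def)
    then show "t p = (\<Sum>i<k. ts i p)" using j by simp
  qed
  moreover have "\<forall>i<k. ts i \<in> tensor_sub (range_op D (Proj i)) (range_op D (conj_op (Proj i)))"
    using tt z by (simp add: ts_def)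
  ultimately show ?thesis unfolding sum_sub_def t_def by blast
qed


theorem lemma1:
  fixes dA dB n k :: nat
    and \<rho> :: "nat list \<Rightarrow> nat list \<Rightarrow> complex"
    and Proj :: "nat \<Rightarrow> nat \<Rightarrow> nat \<Rightarrow> complex"
  assumes "psd_op n (dA * dB) \<rho>"
    and "perm_invariant n (dA * dB) \<rho>"
    and "\<forall>i<k. orth_proj (dA * dB) (Proj i)"
    and "\<forall>i<k. \<forall>j<k. i \<noteq> j \<longrightarrow>
           (\<forall>a<dA * dB. \<forall>b<dA * dB. (\<Sum>c<dA * dB. Proj i a c * Proj j c b) = 0)"
    and "iid_block_diag n (dA * dB) k Proj \<rho>"
  shows "\<exists>\<Psi>. purifies n (dA * dB) \<Psi> \<rho> \<and>
           \<Psi> \<in> Sym n (sum_sub k (\<lambda>i. tensor_sub (range_op (dA * dB) (Proj i))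
                                                 (range_op (dA * dB) (conj_op (Proj i)))))"
proof -
  define D where "D = dA * dB"
  note psd0 = assms(1)[folded D_def] and pinv = assms(2)[folded D_def]
    and orth = assms(3)[folded D_def] and perp = assms(4)[folded D_def]
    and bd = assms(5)[folded D_def]
  define S where "S = idx n D"
  define J where "J = idx n k"
  define T where "T = tensor_proj Proj"
  define V where "V = sum_sub k (\<lambda>i. tensor_sub (range_op D (Proj i)) (range_op D (conj_op (Proj i))))"
  have fS: "finite S" and fJ: "finite J" by (simp_all add: S_def J_def finite_idx)
  have h: "\<forall>x\<in>S. \<forall>y\<in>S. \<rho> x y = cnj (\<rho> y x)" using psd0 unfolding psd_op_def S_def by blast
  have psd: "\<forall>v. 0 \<le> (\<Sum>x\<in>S. \<Sum>y\<in>S. cnj (v x) * \<rho> x y * v y)" using psd0 unfolding psd_op_def S_def by blast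
  obtain p where rp: "realpoly p" and c0: "coeff p 0 = 0"
    and sq: "mmul S (mev S p \<rho>) (mev S p \<rho>) = rst S \<rho>"
    using sqrt_ex[OF fS h psd] by blast
  define B where "B = mev S p \<rho>"
  obtain a r' where pr: "p = pCons a r'" by (cases p)
  with c0 have pr: "p = pCons 0 r'" by simp
  define R where "R = mev S r' \<rho>"
  have BR: "B = mmul S \<rho> R" unfolding B_def R_def pr by (simp add: mev_pCons)
  have hB: "herm B" unfolding B_def by (rule mev_herm[OF fS h rp])
  have sB: "supp S B" unfolding B_def by simp
  have comT: "mmul S (T j) \<rho> = mmul S (mmul S (T j) \<rho>) (T j)"
    "mmul S \<rho> (T j) = mmul S (mmul S (T j) \<rho>) (T j)" if "j \<in> J" for j
    using commute_T[OF orth perp bd that[unfolded J_def]] unfolding S_def T_def by auto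
  have comB: "mmul S (T j) B = mmul S B (T j)" if "j \<in> J" for j
    unfolding B_def by (rule commute_mev[OF fS]) (use comT[OF that] in simp)
  have TTj: "mmul S (T j) (T j) = rst S (T j)" if "j \<in> J" for j
    using TT[OF orth perp, of j n j] that unfolding S_def T_def J_def by simp
  have Bblock: "B = (\<lambda>x y. \<Sum>j\<in>J. mmul S (mmul S (T j) B) (T j) x y)"
  proof -
    have e: "mmul S (mmul S (T j) B) (T j) = mmul S (mmul S (T j) \<rho>) R" if "j \<in> J" for j
    proof -
      have "mmul S (mmul S (T j) B) (T j) = mmul S (T j) (mmul S B (T j))" by (simp add: mmul_assoc[OF fS])
      also have "\<dots> = mmul S (mmul S (T j) (T j)) B" by (simp add: comB[OF that, symmetric] mmul_assoc[OF fS])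
      also have "\<dots> = mmul S (T j) (mmul S \<rho> R)" by (simp add: TTj[OF that] BR)
      also have "\<dots> = mmul S (mmul S (T j) \<rho>) R" by (simp add: mmul_assoc[OF fS])
      finally show ?thesis .
    qed
    have "(\<lambda>x y. \<Sum>j\<in>J. mmul S (mmul S (T j) B) (T j) x y) = (\<lambda>x y. \<Sum>j\<in>J. mmul S (mmul S (T j) \<rho>) R x y)"
      using e by (intro ext sum.cong) auto
    also have "\<dots> = mmul S (\<lambda>x y. \<Sum>j\<in>J. mmul S (T j) \<rho> x y) R" by (simp add: mmul_sum_left)
    also have "(\<lambda>x y. \<Sum>j\<in>J. mmul S (T j) \<rho> x y) = rst S \<rho>"
    proof -
      have "(\<lambda>x y. \<Sum>j\<in>J. mmul S (T j) \<rho> x y) = (\<lambda>x y. \<Sum>j\<in>J. mmul S (mmul S (T j) \<rho>) (T j) x y)"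
        using comT by (intro ext sum.cong) auto
      also have "\<dots> = rst S \<rho>" using block_rst[OF bd] unfolding S_def J_def T_def by simp
      finally show ?thesis .
    qed
    finally show ?thesis by (simp add: BR)
  qed
  have Bperm: "B (permute_list \<pi> x) (permute_list \<pi> y) = B x y"
    if pi: "\<pi> permutes {..<n}" and x: "x \<in> S" and y: "y \<in> S" for \<pi> x y
  proof -
    have bij: "bij_betw (permute_list \<pi>) S S" unfolding S_def by (rule perm_bij[OF pi])
    have "\<forall>x\<in>S. \<forall>y\<in>S. \<rho> (permute_list \<pi> x) (permute_list \<pi> y) = \<rho> x y"
      using pinv pi unfolding perm_invariant_def S_def by blast
    from mev_perm[OF fS bij this] show ?thesis using x y unfolding B_def by blast
  qed
  define \<Psi> where "\<Psi> ps = (if ps \<in> pidx n D then B (map fst ps) (map snd ps) else 0)" for ps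
  have zip_in: "zip x z \<in> pidx n D" if "x \<in> S" "z \<in> S" for x z
  proof -
    have "set (zip x z) \<subseteq> set x \<times> set z" by (auto dest: set_zip_leftD set_zip_rightD)
    then show ?thesis using that by (auto simp: pidx_def S_def idx_def)
  qed
  have pur: "purifies n D \<Psi> \<rho>"
    unfolding purifies_def
  proof (intro ballI)
    fix x y assume x: "x \<in> idx n D" and y: "y \<in> idx n D"
    have lx: "length x = n" and ly: "length y = n" using x y by (auto simp: idx_def)
    have "(\<Sum>z\<in>idx n D. \<Psi> (zip x z) * cnj (\<Psi> (zip y z))) = (\<Sum>z\<in>S. B x z * B z y)"
    proof (intro sum.cong)
      fix z assume z: "z \<in> S"
      then have z: "z \<in> idx n D" by (simp add: S_def)
      have lz: "length z = n" using z by (auto simp: idx_def)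
      have "\<Psi> (zip x z) = B x z" "\<Psi> (zip y z) = B y z"
        using zip_in[of x z] zip_in[of y z] x y z lx ly lz by (auto simp: \<Psi>_def S_def)
      moreover have "cnj (B y z) = B z y" using hB unfolding herm_def by (metis complex_cnj_cnj)
      ultimately show "\<Psi> (zip x z) * cnj (\<Psi> (zip y z)) = B x z * B z y" by simp
    qed (simp add: S_def)
    also have "\<dots> = mmul S B B x y" using x y by (simp add: mmul_def S_def)
    also have "\<dots> = \<rho> x y" using sq x y by (simp add: B_def rst_def S_def)
    finally show "\<rho> x y = (\<Sum>z\<in>idx n D. \<Psi> (zip x z) * cnj (\<Psi> (zip y z)))" by simp
  qed
  define L where "L = J \<times> S \<times> S"
  define vs where "vs l i = (\<lambda>(a, b). if a < D \<and> b < D then Proj (fst l ! i) a (fst (snd l) ! i) * Proj (fst l ! i) (snd (snd l) ! i) b else 0)" for l :: "nat list \<times> nat list \<times> nat list" and i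
  define cc where "cc l = B (fst (snd l)) (snd (snd l))" for l :: "nat list \<times> nat list \<times> nat list"
  have fL: "finite L" unfolding L_def using fS fJ by simp
  have vsV: "\<forall>l\<in>L. \<forall>i<n. vs l i \<in> V"
  proof (intro ballI allI impI)
    fix l i assume l: "l \<in> L" and i: "i < n"
    have "fst l ! i < k" "fst (snd l) ! i < D" "snd (snd l) ! i < D"
      using l i by (auto simp: L_def J_def S_def intro: idx_nth)
    then show "vs l i \<in> V" unfolding vs_def V_def
      using V_mem[of "fst l ! i" k "fst (snd l) ! i" D "snd (snd l) ! i" Proj] orth by auto
  qed
  have Psi_eq: "\<Psi> = (\<lambda>ps. \<Sum>l\<in>L. cc l * prod_vec n (vs l) ps)"
  proof (intro ext)
    fix ps
    show "\<Psi> ps = (\<Sum>l\<in>L. cc l * prod_vec n (vs l) ps)"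
    proof (cases "ps \<in> pidx n D")
      case False
      have "prod_vec n (vs l) ps = 0" for l
      proof (cases "length ps = n")
        case False then show ?thesis by (simp add: prod_vec_def)
      next
        case True
        with \<open>ps \<notin> pidx n D\<close> obtain q where "q \<in> set ps" "q \<notin> {..<D} \<times> {..<D}"
          by (auto simp: pidx_def)
        then obtain i where i: "i < n" "ps ! i \<notin> {..<D} \<times> {..<D}"
          using True by (auto simp: in_set_conv_nth)
        have "vs l i (ps ! i) = 0" using i(2) by (auto simp: vs_def split: prod.split)
        then show ?thesis using True i(1) by (auto simp: prod_vec_def intro!: prod_zero)
      qed
      then show ?thesis using False by (simp add: \<Psi>_def)
    next
      case True
      define x where "x = map fst ps"
      define z where "z = map snd ps"
      have lps: "length ps = n" using True by (simp add: pidx_def)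
      have xS: "x \<in> S" and zS: "z \<in> S" using True by (auto simp: pidx_def S_def idx_def x_def z_def)
      have ent: "fst (ps ! i) < D \<and> snd (ps ! i) < D" if "i < n" for i
      proof -
        have "ps ! i \<in> set ps" using that lps by simp
        then show ?thesis using True by (auto simp: pidx_def mem_Times_iff)
      qed
      have pv: "prod_vec n (vs (j, u, w)) ps = T j x u * T j w z" if "j \<in> J" for j u w
      proof -
        have lj: "length j = n" using that by (simp add: J_def idx_def)
        have "prod_vec n (vs (j, u, w)) ps = (\<Prod>i<n. Proj (j ! i) (x ! i) (u ! i) * Proj (j ! i) (w ! i) (z ! i))"
          unfolding prod_vec_def using lps ent
          by (auto simp: vs_def x_def z_def case_prod_beta intro!: prod.cong)
        also have "\<dots> = T j x u * T j w z"
          by (simp add: T_def tensor_proj_def lj prod.distrib)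
        finally show ?thesis .
      qed
      have "(\<Sum>l\<in>L. cc l * prod_vec n (vs l) ps) = (\<Sum>j\<in>J. \<Sum>u\<in>S. \<Sum>w\<in>S. B u w * (T j x u * T j w z))"
      proof -
        have "(\<Sum>l\<in>L. cc l * prod_vec n (vs l) ps) = (\<Sum>j\<in>J. \<Sum>u\<in>S. \<Sum>w\<in>S. cc (j, u, w) * prod_vec n (vs (j, u, w)) ps)"
          unfolding L_def by (simp add: sum.cartesian_product')
        also have "\<dots> = (\<Sum>j\<in>J. \<Sum>u\<in>S. \<Sum>w\<in>S. B u w * (T j x u * T j w z))"
          by (intro sum.cong refl) (simp add: cc_def pv)
        finally show ?thesis .
      qed
      also have "\<dots> = (\<Sum>j\<in>J. mmul S (mmul S (T j) B) (T j) x z)"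
      proof (intro sum.cong refl)
        fix j
        have "mmul S (mmul S (T j) B) (T j) x z = (\<Sum>w\<in>S. (\<Sum>u\<in>S. T j x u * B u w) * T j w z)"
          using xS zS by (simp add: mmul_def cong: sum.cong)
        also have "\<dots> = (\<Sum>w\<in>S. \<Sum>u\<in>S. T j x u * B u w * T j w z)"
          by (simp only: sum_distrib_right)
        also have "\<dots> = (\<Sum>w\<in>S. \<Sum>u\<in>S. B u w * (T j x u * T j w z))"
          by (intro sum.cong refl) (simp only: mult_ac)
        also have "\<dots> = (\<Sum>u\<in>S. \<Sum>w\<in>S. B u w * (T j x u * T j w z))"
          by (rule sum.swap)
        finally show "(\<Sum>u\<in>S. \<Sum>w\<in>S. B u w * (T j x u * T j w z)) = mmul S (mmul S (T j) B) (T j) x z" by simp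
      qed
      also have "\<dots> = B x z" by (subst (2) Bblock) simp
      finally show ?thesis using True by (simp add: \<Psi>_def x_def z_def)
    qed
  qed
  have inTP: "\<Psi> \<in> tensor_pow n V" unfolding Psi_eq by (rule tp_finite[OF fL vsV])
  have symm: "(\<lambda>ps. \<Psi> (permute_list \<pi> ps)) = \<Psi>" if pi: "\<pi> permutes {..<n}" for \<pi>
  proof (intro ext)
    fix ps
    show "\<Psi> (permute_list \<pi> ps) = \<Psi> ps"
    proof (cases "length ps = n")
      case False
      then show ?thesis by (simp add: \<Psi>_def pidx_def)
    next
      case True
      then have pi': "\<pi> permutes {..<length ps}" using pi by simp
      have set_eq: "set (permute_list \<pi> ps) = set ps" using set_permute_list[OF pi'] .
      show ?thesis
      proof (cases "ps \<in> pidx n D")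
        case False
        then have "permute_list \<pi> ps \<notin> pidx n D" using set_eq by (simp add: pidx_def)
        then show ?thesis using False by (simp add: \<Psi>_def)
      next
        case True
        then have inP: "permute_list \<pi> ps \<in> pidx n D" using set_eq by (simp add: pidx_def)
        have xS: "map fst ps \<in> S" and zS: "map snd ps \<in> S" using True by (auto simp: pidx_def S_def idx_def)
        have "map fst (permute_list \<pi> ps) = permute_list \<pi> (map fst ps)"
          using permute_list_map[OF pi', of fst] by simp
        moreover have "map snd (permute_list \<pi> ps) = permute_list \<pi> (map snd ps)"
          using permute_list_map[OF pi', of snd] by simp
        ultimately show ?thesis using True inP Bperm[OF pi xS zS] by (simp add: \<Psi>_def)
      qed
    qed
  qed
  have "\<Psi> \<in> Sym n V" unfolding Sym_def using inTP symm by blast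
  then show ?thesis using pur unfolding V_def D_def by blast
qed

end
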